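(* Let $q\ge2$ and let $n,k$ be integers with $0<k\le n$. Then $$2^{nE_{k,q}}\le a_q(n,k)\le 2^{nE_{k,q}}+2q^{\,n-\lceil k/2\rceil}.$$
   Context: $\Sigma_q=\{0,\dots,q-1\}$. A vector in $\Sigma_q^n$ is a $k$-RLL vector if $n<k$ or it has no run of $k$ consecutive zeros; $a_q(n,k)$ is the number of $k$-RLL vectors in $\Sigma_q^n$. For fixed $k,q$, the capacity is $E_{k,q}=\lim_{n\to\infty}\frac{\log_2 a_q(n,k)}{n}$ (this limit exists). *)

theory Defs
  imports Complex_Main
begin

definition is_RLL :: "nat \<Rightarrow> nat list \<Rightarrow> bool" where
  "is_RLL k xs \<longleftrightarrow> length xs < k \<or>
     \<not> (\<exists>i. i + k \<le> length xs \<and> (\<forall>j<k. xs ! (i + j) = 0))"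

definition RLL_vectors :: "nat \<Rightarrow> nat \<Rightarrow> nat \<Rightarrow> nat list set" where
  "RLL_vectors q n k = {xs. length xs = n \<and> set xs \<subseteq> {0..<q} \<and> is_RLL k xs}"

definition a_RLL :: "nat \<Rightarrow> nat \<Rightarrow> nat \<Rightarrow> nat" where
  "a_RLL q n k = card (RLL_vectors q n k)"

definition capacity :: "nat \<Rightarrow> nat \<Rightarrow> real" where
  "capacity k q = lim (\<lambda>n. log 2 (real (a_RLL q n k)) / real n)"

end

theory Submission
  imports Defs
begin


lemma fekete:
  fixes f :: "nat \<Rightarrow> real"
  assumes sub: "\<And>m n. f (m+n) \<le> f m + f n" and nn: "\<And>n. f n \<ge> 0"
  shows "(\<lambda>n. f n / real n) \<longlonglongrightarrow> Inf ((\<lambda>n. f n / real n) ` {1..})"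
proof -
  define S where "S = (\<lambda>n. f n / real n) ` {1..}"
  define L where "L = Inf S"
  have bdd: "bdd_below S" unfolding S_def
    by (rule bdd_belowI[of _ 0]) (auto intro: divide_nonneg_nonneg nn)
  have ne: "S \<noteq> {}" unfolding S_def by auto
  have low: "L \<le> f n / real n" if "n \<ge> 1" for n
    unfolding L_def using that bdd by (auto intro!: cInf_lower simp: S_def)
  have mult: "f (s*p + r) \<le> real s * f p + f r" for s p r
  proof (induction s)
    case 0 then show ?case by simp
  next
    case (Suc s)
    have "f (Suc s * p + r) = f (p + (s*p + r))" by (simp add: algebra_simps)
    also have "\<dots> \<le> f p + f (s*p+r)" by (rule sub)
    finally show ?case using Suc by (simp add: algebra_simps)
  qed
  have lin: "f r \<le> f 0 + real r * f 1" for r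
  proof (induction r)
    case 0 then show ?case by simp
  next
    case (Suc r)
    have "f (Suc r) \<le> f 1 + f r" using sub[of 1 r] by simp
    then show ?case using Suc by (simp add: algebra_simps)
  qed
  show ?thesis unfolding S_def[symmetric] L_def[symmetric]
  proof (rule LIMSEQ_I)
    fix e :: real assume e: "0 < e"
    have "L < L + e/2" using e by simp
    then obtain x where "x \<in> S" "x < L + e/2" using cInf_less_iff[OF ne bdd] unfolding L_def by blast
    then obtain p where p: "p \<ge> 1" "f p / real p < L + e/2" unfolding S_def by auto
    define C where "C = f 0 + real p * f 1"
    have C: "C \<ge> 0" unfolding C_def using nn[of 0] nn[of 1] by simp
    define N where "N = nat \<lceil>2 * C / e\<rceil> + 1"
    have "\<forall>n\<ge>N. norm (f n / real n - L) < e"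
    proof (intro allI impI)
      fix n assume n: "N \<le> n"
      have n1: "n \<ge> 1" using n N_def by simp
      have npos: "real n > 0" using n1 by simp
      have "real n \<ge> real N" using n by simp
      moreover have "real N > 2 * C / e" unfolding N_def by linarith
      ultimately have nC: "2 * C / e < real n" by linarith
      hence "C / real n < e / 2" using e npos by (simp add: field_simps)
      have "f n = f ((n div p) * p + n mod p)" by simp
      also have "\<dots> \<le> real (n div p) * f p + f (n mod p)" by (rule mult)
      also have "f (n mod p) \<le> C"
      proof -
        have "n mod p < p" using p by simp
        hence "real (n mod p) * f 1 \<le> real p * f 1" using nn[of 1] by (intro mult_right_mono) auto
        thus ?thesis using lin[of "n mod p"] unfolding C_def by linarith
      qed
      finally have fn: "f n \<le> real (n div p) * f p + C" by simp
      have "real (n div p) * real p \<le> real n"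
        by (metis div_times_less_eq_dividend of_nat_le_iff of_nat_mult)
      hence "real (n div p) \<le> real n / real p" using p by (simp add: field_simps)
      hence "real (n div p) * f p \<le> real n / real p * f p" using nn[of p] by (rule mult_right_mono)
      hence "f n \<le> real n * (f p / real p) + C" using fn by simp
      hence "f n / real n \<le> f p / real p + C / real n" using npos by (simp add: field_simps)
      hence up: "f n / real n < L + e" using p(2) \<open>C / real n < e / 2\<close> by linarith
      have "L \<le> f n / real n" using low n1 by simp
      thus "norm (f n / real n - L) < e" using up by simp
    qed
    thus "\<exists>no. \<forall>n\<ge>no. norm (f n / real n - L) < e" by blast
  qed
qed



definition has_run :: "nat \<Rightarrow> nat list \<Rightarrow> bool" where
  "has_run k xs \<longleftrightarrow> (\<exists>i. i + k \<le> length xs \<and> (\<forall>j<k. xs ! (i + j) = 0))"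

lemma is_RLL_iff: "is_RLL k xs \<longleftrightarrow> \<not> has_run k xs"
  unfolding is_RLL_def has_run_def by auto

lemma run_take: "has_run k (take m xs) \<Longrightarrow> has_run k xs"
  unfolding has_run_def
proof -
  assume "\<exists>i. i + k \<le> length (take m xs) \<and> (\<forall>j<k. take m xs ! (i + j) = 0)"
  then obtain i where i: "i + k \<le> length (take m xs)" "\<forall>j<k. take m xs ! (i + j) = 0" by blast
  have "\<forall>j<k. xs ! (i + j) = 0" using i by auto
  moreover have "i + k \<le> length xs" using i by auto
  ultimately show "\<exists>i. i + k \<le> length xs \<and> (\<forall>j<k. xs ! (i + j) = 0)" by blast
qed

lemma run_drop: "has_run k (drop m xs) \<Longrightarrow> has_run k xs"
  unfolding has_run_def
proof -
  assume "\<exists>i. i + k \<le> length (drop m xs) \<and> (\<forall>j<k. drop m xs ! (i + j) = 0)"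
  then obtain i where i: "i + k \<le> length (drop m xs)" "\<forall>j<k. drop m xs ! (i + j) = 0" by blast
  show "\<exists>i. i + k \<le> length xs \<and> (\<forall>j<k. xs ! (i + j) = 0)"
  proof (cases "k = 0")
    case True then show ?thesis by auto
  next
    case False
    hence "m \<le> length xs" using i by auto
    hence "m + i + k \<le> length xs" using i by auto
    moreover have "\<forall>j<k. xs ! (m + i + j) = 0" using i \<open>m \<le> length xs\<close>
      by (auto simp: add.assoc)
    ultimately show ?thesis by blast
  qed
qed

lemma RLL_take: "is_RLL k xs \<Longrightarrow> is_RLL k (take m xs)"
  using run_take unfolding is_RLL_iff by blast

lemma RLL_drop: "is_RLL k xs \<Longrightarrow> is_RLL k (drop m xs)"
  using run_drop unfolding is_RLL_iff by blast

lemma finite_RLL: "finite (RLL_vectors q n k)"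
proof -
  have "RLL_vectors q n k \<subseteq> {xs. set xs \<subseteq> {0..<q} \<and> length xs = n}"
    unfolding RLL_vectors_def by auto
  thus ?thesis using finite_lists_length_eq[of "{0..<q}" n] finite_subset by blast
qed

lemma a_pos: assumes "q \<ge> 2" "k > 0" shows "a_RLL q n k \<ge> 1"
proof -
  have "\<not> has_run k (replicate n 1)"
  proof
    assume "has_run k (replicate n 1)"
    then obtain i where i: "i + k \<le> n" "\<forall>j<k. replicate n (1::nat) ! (i + j) = 0"
      unfolding has_run_def by auto
    have "replicate n (1::nat) ! (i + 0) = 0" using i(2) assms(2) by blast
    moreover have "i + 0 < n" using i(1) assms(2) by linarith
    ultimately show False by simp
  qed
  hence "replicate n 1 \<in> RLL_vectors q n k"
    using assms unfolding RLL_vectors_def is_RLL_iff by auto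
  hence "RLL_vectors q n k \<noteq> {}" by auto
  thus ?thesis unfolding a_RLL_def using finite_RLL
    by (simp add: Suc_leI card_gt_0_iff)
qed

lemma a_submult: "a_RLL q (m+n) k \<le> a_RLL q m k * a_RLL q n k"
proof -
  have "card (RLL_vectors q (m+n) k) \<le> card (RLL_vectors q m k \<times> RLL_vectors q n k)"
  proof (rule card_inj_on_le[where f="\<lambda>xs. (take m xs, drop m xs)"])
    show "inj_on (\<lambda>xs. (take m xs, drop m xs)) (RLL_vectors q (m + n) k)"
      by (rule inj_onI) (metis append_take_drop_id prod.inject)
    show "(\<lambda>xs. (take m xs, drop m xs)) ` RLL_vectors q (m + n) k \<subseteq> RLL_vectors q m k \<times> RLL_vectors q n k"
      unfolding RLL_vectors_def using RLL_take RLL_drop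
      by (auto dest: in_set_takeD in_set_dropD)
    show "finite (RLL_vectors q m k \<times> RLL_vectors q n k)" using finite_RLL by auto
  qed
  thus ?thesis unfolding a_RLL_def by (simp add: card_cartesian_product)
qed



definition good :: "nat \<Rightarrow> nat list \<Rightarrow> bool" where
  "good c xs \<longleftrightarrow> c \<le> length xs \<and> (\<exists>j<c. xs ! j \<noteq> 0) \<and> (\<exists>j<c. xs ! (length xs - c + j) \<noteq> 0)"

lemma append_good:
  assumes k: "0 < k" "2 * c \<le> k + 1"
    and x: "is_RLL k xs" "good c xs" and y: "is_RLL k ys" "good c ys"
  shows "is_RLL k (xs @ ys) \<and> good c (xs @ ys)"
proof
  from x(2) obtain j1 where j1: "j1 < c" "xs ! j1 \<noteq> 0" and lx: "c \<le> length xs"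
    and t1: "\<exists>j<c. xs ! (length xs - c + j) \<noteq> 0" unfolding good_def by blast
  from y(2) obtain j2 where j2: "j2 < c" "ys ! (length ys - c + j2) \<noteq> 0" and ly: "c \<le> length ys"
    and t2: "\<exists>j<c. ys ! j \<noteq> 0" unfolding good_def by blast
  show "good c (xs @ ys)" unfolding good_def
  proof (intro conjI)
    show "c \<le> length (xs @ ys)" using lx by simp
    show "\<exists>j<c. (xs @ ys) ! j \<noteq> 0" using j1 lx by (intro exI[of _ j1]) (simp add: nth_append)
    have "length (xs @ ys) - c + j2 = length xs + (length ys - c + j2)" using ly by simp
    then show "\<exists>j<c. (xs @ ys) ! (length (xs @ ys) - c + j) \<noteq> 0" using j2
      by (intro exI[of _ j2]) (simp add: nth_append)
  qed
  show "is_RLL k (xs @ ys)" unfolding is_RLL_iff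
  proof
    assume "has_run k (xs @ ys)"
    then obtain i where i: "i + k \<le> length xs + length ys"
      and z: "\<And>j. j < k \<Longrightarrow> (xs @ ys) ! (i + j) = 0" unfolding has_run_def by auto
    consider "i + k \<le> length xs" | "length xs \<le> i" | "i < length xs" "length xs < i + k" by linarith
    then show False
    proof cases
      case 1
      have "has_run k xs" unfolding has_run_def
        using 1 z by (intro exI[of _ i]) (auto simp: nth_append)
      then show False using x(1) unfolding is_RLL_iff by blast
    next
      case 2
      have "has_run k ys" unfolding has_run_def
      proof (intro exI[of _ "i - length xs"] conjI allI impI)
        show "i - length xs + k \<le> length ys" using i 2 by linarith
        fix j assume "j < k"
        have "(xs @ ys) ! (i + j) = ys ! (i - length xs + j)" using 2 by (simp add: nth_append)
        then show "ys ! (i - length xs + j) = 0" using z[OF \<open>j<k\<close>] by simp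
      qed
      then show False using y(1) unfolding is_RLL_iff by blast
    next
      case 3
      define d where "d = length xs - i"
      show False
      proof (cases "c \<le> d")
        case True
        from t1 obtain j where j: "j < c" "xs ! (length xs - c + j) \<noteq> 0" by blast
        have eq: "length xs - c + j = i + (d - c + j)" using True j 3 d_def by linarith
        have "d - c + j < k" using True j 3 d_def by linarith
        hence "(xs @ ys) ! (i + (d - c + j)) = 0" by (rule z)
        moreover have "i + (d - c + j) < length xs" using eq j lx by linarith
        ultimately show False using j eq by (simp add: nth_append)
      next
        case False
        from t2 obtain j where j: "j < c" "ys ! j \<noteq> 0" by blast
        have "d + j < k" using False j k d_def by linarith
        hence "(xs @ ys) ! (i + (d + j)) = 0" by (rule z)
        moreover have "i + (d + j) = length xs + j" using 3 d_def by linarith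
        ultimately show False using j by (simp add: nth_append)
      qed
    qed
  qed
qed

lemma concat_good:
  assumes k: "0 < k" "2 * c \<le> k + 1"
  shows "\<forall>y\<in>set ys. is_RLL k y \<and> good c y \<Longrightarrow> ys \<noteq> [] \<Longrightarrow> is_RLL k (concat ys) \<and> good c (concat ys)"
proof (induction ys)
  case Nil then show ?case by simp
next
  case (Cons y ys)
  show ?case
  proof (cases "ys = []")
    case True then show ?thesis using Cons.prems(1) by simp
  next
    case False
    then have h: "is_RLL k (concat ys) \<and> good c (concat ys)" using Cons.IH Cons.prems(1) by simp
    have "is_RLL k y" "good c y" using Cons.prems(1) by auto
    then have "is_RLL k (y @ concat ys) \<and> good c (y @ concat ys)"
      using append_good[OF k] h by blast
    then show ?thesis by simp
  qed
qed

lemma length_concat_const: "\<forall>y\<in>set ys. length y = n \<Longrightarrow> length (concat ys) = length ys * n"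
  by (induction ys) auto

lemma concat_inj: "\<forall>y\<in>set xs. length y = n \<Longrightarrow> \<forall>y\<in>set ys. length y = n \<Longrightarrow>
   length xs = length ys \<Longrightarrow> concat xs = concat ys \<Longrightarrow> xs = ys"
proof (induction xs arbitrary: ys)
  case Nil then show ?case by simp
next
  case (Cons x xs)
  from Cons.prems(3) obtain y ys' where ys: "ys = y # ys'" by (cases ys) auto
  have e: "x @ concat xs = y @ concat ys'" using Cons.prems(4) ys by simp
  have l: "length x = length y" using Cons.prems(1,2) ys by simp
  from e l have "x = y \<and> concat xs = concat ys'" by (simp add: append_eq_append_conv)
  hence "x = y" "concat xs = concat ys'" by auto
  moreover have "xs = ys'" 
    using Cons.IH[of ys'] Cons.prems(1,2,3) ys \<open>concat xs = concat ys'\<close> by simp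
  ultimately show ?case using ys by simp
qed


lemma power_lower:
  assumes k: "0 < k" "2 * c \<le> k + 1" and m: "m \<ge> 1"
  shows "card {xs \<in> RLL_vectors q n k. good c xs} ^ m \<le> a_RLL q (m*n) k"
proof -
  define B where "B = {xs \<in> RLL_vectors q n k. good c xs}"
  have fB: "finite B" unfolding B_def using finite_RLL by auto
  define Ls where "Ls = {ys. set ys \<subseteq> B \<and> length ys = m}"
  have "card Ls = card B ^ m" unfolding Ls_def using card_lists_length_eq[OF fB] by simp
  moreover have "card Ls \<le> card (RLL_vectors q (m*n) k)"
  proof (rule card_inj_on_le[where f=concat])
    show "inj_on concat Ls"
    proof (rule inj_onI)
      fix xs ys assume "xs \<in> Ls" "ys \<in> Ls" "concat xs = concat ys"
      moreover have "\<forall>y\<in>B. length y = n" unfolding B_def RLL_vectors_def by auto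
      ultimately show "xs = ys" unfolding Ls_def
        by (intro concat_inj[of xs n ys]) auto
    qed
    show "concat ` Ls \<subseteq> RLL_vectors q (m * n) k"
    proof
      fix zs assume "zs \<in> concat ` Ls"
      then obtain ys where ys: "set ys \<subseteq> B" "length ys = m" "zs = concat ys"
        unfolding Ls_def by auto
      have len: "\<forall>y\<in>set ys. length y = n" using ys(1) unfolding B_def RLL_vectors_def by auto
      have "ys \<noteq> []" using ys(2) m by auto
      moreover have "\<forall>y\<in>set ys. is_RLL k y \<and> good c y" using ys(1) unfolding B_def RLL_vectors_def by auto
      ultimately have "is_RLL k zs" using concat_good[OF k] ys(3) by blast
      moreover have "length zs = m * n" using length_concat_const[OF len] ys by simp
      moreover have "set zs \<subseteq> {0..<q}" using ys(1,3) unfolding B_def RLL_vectors_def by auto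
      ultimately show "zs \<in> RLL_vectors q (m * n) k" unfolding RLL_vectors_def by auto
    qed
    show "finite (RLL_vectors q (m * n) k)" by (rule finite_RLL)
  qed
  ultimately show ?thesis unfolding B_def a_RLL_def by simp
qed

lemma B_bound:
  assumes "c \<le> n"
  shows "a_RLL q n k \<le> card {xs \<in> RLL_vectors q n k. good c xs} + 2 * q ^ (n - c)"
proof -
  define B where "B = {xs \<in> RLL_vectors q n k. good c xs}"
  define W where "W = {zs. set zs \<subseteq> {0..<q} \<and> length zs = n - c}"
  have cW: "card W = q ^ (n - c)" unfolding W_def using card_lists_length_eq[of "{0..<q}"] by simp
  have sub: "RLL_vectors q n k \<subseteq> B \<union> (\<lambda>zs. replicate c 0 @ zs) ` W \<union> (\<lambda>zs. zs @ replicate c 0) ` W"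
  proof
    fix xs assume xs: "xs \<in> RLL_vectors q n k"
    show "xs \<in> B \<union> (\<lambda>zs. replicate c 0 @ zs) ` W \<union> (\<lambda>zs. zs @ replicate c 0) ` W"
    proof (cases "good c xs")
      case True then show ?thesis using xs unfolding B_def by auto
    next
      case False
      have l: "length xs = n" and s: "set xs \<subseteq> {0..<q}" using xs unfolding RLL_vectors_def by auto
      from False consider "\<forall>j<c. xs ! j = 0" | "\<forall>j<c. xs ! (n - c + j) = 0"
        unfolding good_def using l assms by auto
      then show ?thesis
      proof cases
        case 1
        have "take c xs = replicate c 0" using 1 l assms by (intro nth_equalityI) auto
        hence "xs = replicate c 0 @ drop c xs" by (metis append_take_drop_id)
        moreover have "drop c xs \<in> W" unfolding W_def using l s by (auto dest: in_set_dropD)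
        ultimately show ?thesis by blast
      next
        case 2
        have "drop (n - c) xs = replicate c 0" using 2 l assms by (intro nth_equalityI) auto
        hence "xs = take (n - c) xs @ replicate c 0" by (metis append_take_drop_id)
        moreover have "take (n - c) xs \<in> W" unfolding W_def using l s assms by (auto dest: in_set_takeD)
        ultimately show ?thesis by blast
      qed
    qed
  qed
  have fW: "finite W" unfolding W_def by (rule finite_lists_length_eq) simp
  have fB: "finite B" unfolding B_def using finite_RLL by auto
  have "card (RLL_vectors q n k) \<le> card (B \<union> (\<lambda>zs. replicate c 0 @ zs) ` W \<union> (\<lambda>zs. zs @ replicate c 0) ` W)"
    using sub fW fB by (intro card_mono) auto
  also have "\<dots> \<le> card B + card ((\<lambda>zs. replicate c 0 @ zs) ` W) + card ((\<lambda>zs. zs @ replicate c 0) ` W)"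
    by (meson card_Un_le add_le_mono order_trans le_refl)
  also have "\<dots> \<le> card B + card W + card W" using card_image_le[OF fW] by (intro add_mono) auto
  finally show ?thesis unfolding a_RLL_def B_def using cW by simp
qed



lemma ceil_half: "real_of_int \<lceil>real k / 2\<rceil> = real ((k + 1) div 2)"
proof -
  have "\<lceil>real k / 2\<rceil> = int ((k + 1) div 2)"
  proof (rule ceiling_unique)
    show "real_of_int (int ((k + 1) div 2)) - 1 < real k / 2"
      by (cases "even k") (auto elim!: evenE oddE simp: field_simps)
    show "real k / 2 \<le> real_of_int (int ((k + 1) div 2))"
      by (cases "even k") (auto elim!: evenE oddE simp: field_simps)
  qed
  thus ?thesis by simp
qed

theorem lemma2:
  fixes q n k :: nat
  assumes "q \<ge> 2" and "0 < k" and "k \<le> n"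
  shows "2 powr (real n * capacity k q) \<le> real (a_RLL q n k) \<and>
         real (a_RLL q n k) \<le> 2 powr (real n * capacity k q)
            + 2 * real q powr (real n - real_of_int \<lceil>real k / 2\<rceil>)"
proof -
  define f where "f m = log 2 (real (a_RLL q m k))" for m
  have apos: "real (a_RLL q m k) \<ge> 1" for m using a_pos[OF assms(1,2)] by simp
  have fnn: "f m \<ge> 0" for m unfolding f_def using apos[of m] by (subst zero_le_log_cancel_iff) auto
  have fsub: "f (m + m') \<le> f m + f m'" for m m'
  proof -
    have "real (a_RLL q (m+m') k) \<le> real (a_RLL q m k) * real (a_RLL q m' k)"
      using a_submult[of q m m' k] by (metis of_nat_le_iff of_nat_mult)
    hence "f (m+m') \<le> log 2 (real (a_RLL q m k) * real (a_RLL q m' k))"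
      unfolding f_def using apos[of "m+m'"] by simp
    also have "\<dots> = f m + f m'" unfolding f_def using apos[of m] apos[of m']
      by (simp add: log_mult)
    finally show ?thesis .
  qed
  define L where "L = Inf ((\<lambda>n. f n / real n) ` {1..})"
  have lim: "(\<lambda>n. f n / real n) \<longlonglongrightarrow> L" unfolding L_def by (rule fekete[OF fsub fnn])
  have capL: "capacity k q = L" unfolding capacity_def
    using lim unfolding f_def by (rule limI)
  have n1: "n \<ge> 1" using assms by simp
  have npos: "real n > 0" using n1 by simp
  have bdd: "bdd_below ((\<lambda>n. f n / real n) ` {1..})"
    by (rule bdd_belowI[of _ 0]) (auto intro: divide_nonneg_nonneg fnn)
  have "L \<le> f n / real n" unfolding L_def using n1 bdd by (auto intro!: cInf_lower)
  hence nL: "real n * L \<le> f n" using npos by (simp add: field_simps)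
  have low: "2 powr (real n * L) \<le> real (a_RLL q n k)"
  proof -
    have "2 powr (real n * L) \<le> 2 powr (f n)" using nL by simp
    also have "\<dots> = real (a_RLL q n k)" unfolding f_def using apos[of n] by simp
    finally show ?thesis .
  qed
  define c where "c = (k + 1) div 2"
  have c2: "2 * c \<le> k + 1" unfolding c_def by simp
  have cn: "c \<le> n" unfolding c_def using assms by simp
  define b where "b = card {xs \<in> RLL_vectors q n k. good c xs}"
  have Bb: "a_RLL q n k \<le> b + 2 * q ^ (n - c)" unfolding b_def by (rule B_bound[OF cn])
  have pw: "2 * real q powr (real n - real_of_int \<lceil>real k / 2\<rceil>) = real (2 * q ^ (n - c))"
  proof -
    have "real n - real_of_int \<lceil>real k / 2\<rceil> = real (n - c)" using ceil_half[of k] cn c_def by simp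
    thus ?thesis using assms(1) by (simp add: powr_realpow)
  qed
  have bL: "real b \<le> 2 powr (real n * L)"
  proof (cases "b = 0")
    case True then show ?thesis by simp
  next
    case False
    hence bpos: "real b \<ge> 1" by simp
    have sm: "strict_mono (\<lambda>m. m * n)" using n1 by (intro strict_monoI) simp
    have lim2: "(\<lambda>m. f (m * n) / real (m * n)) \<longlonglongrightarrow> L"
      using LIMSEQ_subseq_LIMSEQ[OF lim sm] by (simp add: o_def)
    have "log 2 (real b) / real n \<le> L"
    proof (rule LIMSEQ_le_const[OF lim2], intro exI allI impI)
      fix m :: nat assume m: "1 \<le> m"
      have "b ^ m \<le> a_RLL q (m * n) k" unfolding b_def by (rule power_lower[OF assms(2) c2 m])
      hence "real b ^ m \<le> real (a_RLL q (m * n) k)" by (metis of_nat_le_iff of_nat_power)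
      hence "log 2 (real b ^ m) \<le> f (m * n)" unfolding f_def using bpos apos[of "m*n"]
        by (subst log_le_cancel_iff) auto
      hence "real m * log 2 (real b) \<le> f (m * n)" using bpos by (simp add: log_nat_power)
      moreover have "real m > 0" using m by simp
      ultimately show "log 2 (real b) / real n \<le> f (m * n) / real (m * n)"
        using npos by (simp add: field_simps)
    qed
    hence "log 2 (real b) \<le> real n * L" using npos by (simp add: field_simps)
    hence "2 powr (log 2 (real b)) \<le> 2 powr (real n * L)" by simp
    thus ?thesis using bpos by simp
  qed
  have "real (a_RLL q n k) \<le> real b + real (2 * q ^ (n - c))" using Bb
    by (metis of_nat_add of_nat_le_iff)
  hence "real (a_RLL q n k) \<le> 2 powr (real n * L) + 2 * real q powr (real n - real_of_int \<lceil>real k / 2\<rceil>)"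
    using bL pw by linarith
  thus ?thesis using low capL by simp
qed

end
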